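(* Let $N=[n]$, let $v:2^N\to\mathbb{R}_+$ be a monotone submodular valuation with $v(\emptyset)=0$, and let $X$ be a decision map for $v$. Let $p=(p_1,\dots,p_n)$ be a mixed Nash equilibrium of the pricing game defined by $v$ and $X$. Then for every $i$, $p_i\ge v(\{i\}\mid N\setminus\{i\})$ with probability $1$. Moreover, if $\mathbb{E}[u_i(p)]=0$, then $\Pr[v(\{i\}\mid X(p))>0]=0$.
   Context: Pricing game: $N=[n]$ services, service $i$ controlled by seller $i$. Buyer valuation $v:2^N\to\mathbb{R}_+$, monotone, $v(\emptyset)=0$; submodular means $v(S\cup T)+v(S\cap T)\le v(S)+v(T)$. Marginal value $v(T\mid S)=v(S\cup T)-v(S)$. For $p\in\mathbb{R}^n_+$, $p(S)=\sum_{j\in S}p_j$, $D(v;p)=\arg\max_{S\subseteq N}(v(S)-p(S))$. A decision map is $X:\mathbb{R}^n_+\to2^N$ with $X(p)\in D(v;p)$ for all $p$. Seller $i$'s utility is $u_i(p)=p_i\mathbf{1}\{i\in X(p)\}$. A mixed Nash equilibrium is a vector $p=(p_1,\dots,p_n)$ of independent random variables with values in $\mathbb{R}_+$ such that $\mathbb{E}[u_i(p_i,p_{-i})]\ge\mathbb{E}[u_i(p_i',p_{-i})]$ for every $i$ and every $p_i'\in\mathbb{R}_+$. *)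

theory Defs
  imports "HOL-Probability.Probability"
begin

text \<open>Services are indexed by N = {..<n} (0-based). Prices are functions nat => real;
  only their values on {..<n} matter.\<close>

definition monotone_val :: "nat \<Rightarrow> (nat set \<Rightarrow> real) \<Rightarrow> bool" where
  "monotone_val n v \<longleftrightarrow> (\<forall>S T. S \<subseteq> T \<and> T \<subseteq> {..<n} \<longrightarrow> v S \<le> v T)"

definition submodular_val :: "nat \<Rightarrow> (nat set \<Rightarrow> real) \<Rightarrow> bool" where
  "submodular_val n v \<longleftrightarrow>
     (\<forall>S T. S \<subseteq> {..<n} \<and> T \<subseteq> {..<n} \<longrightarrow> v (S \<union> T) + v (S \<inter> T) \<le> v S + v T)"

definition valuation :: "nat \<Rightarrow> (nat set \<Rightarrow> real) \<Rightarrow> bool" where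
  "valuation n v \<longleftrightarrow> (\<forall>S. S \<subseteq> {..<n} \<longrightarrow> 0 \<le> v S) \<and> v {} = 0"

definition marg :: "(nat set \<Rightarrow> real) \<Rightarrow> nat set \<Rightarrow> nat set \<Rightarrow> real" where
  "marg v T S = v (S \<union> T) - v S"

definition demand :: "nat \<Rightarrow> (nat set \<Rightarrow> real) \<Rightarrow> (nat \<Rightarrow> real) \<Rightarrow> nat set set" where
  "demand n v p = {S. S \<subseteq> {..<n} \<and>
     (\<forall>T. T \<subseteq> {..<n} \<longrightarrow> v T - sum p T \<le> v S - sum p S)}"

definition nonneg_prices :: "nat \<Rightarrow> (nat \<Rightarrow> real) \<Rightarrow> bool" where
  "nonneg_prices n p \<longleftrightarrow> (\<forall>i<n. 0 \<le> p i)"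

definition decision_map :: "nat \<Rightarrow> (nat set \<Rightarrow> real) \<Rightarrow> ((nat \<Rightarrow> real) \<Rightarrow> nat set) \<Rightarrow> bool" where
  "decision_map n v X \<longleftrightarrow> (\<forall>p. nonneg_prices n p \<longrightarrow> X p \<in> demand n v p)"

definition seller_util :: "((nat \<Rightarrow> real) \<Rightarrow> nat set) \<Rightarrow> nat \<Rightarrow> (nat \<Rightarrow> real) \<Rightarrow> real" where
  "seller_util X i p = (if i \<in> X p then p i else 0)"

definition joint :: "nat \<Rightarrow> (nat \<Rightarrow> real measure) \<Rightarrow> (nat \<Rightarrow> real) measure" where
  "joint n mu = PiM {..<n} mu"

text \<open>Mixed Nash equilibrium: independent prices (product law), each a probability
  distribution on the Borel reals concentrated on [0,\<infinity>); expected utilities are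
  well-defined (measurable utilities, which are bounded by v(N)), and no unilateral
  deviation to a deterministic price p_i' \<ge> 0 is profitable.\<close>
definition mixed_NE ::
  "nat \<Rightarrow> ((nat \<Rightarrow> real) \<Rightarrow> nat set) \<Rightarrow> (nat \<Rightarrow> real measure) \<Rightarrow> bool" where
  "mixed_NE n X mu \<longleftrightarrow>
     (\<forall>i<n. prob_space (mu i) \<and> sets (mu i) = sets borel \<and> (AE x in mu i. 0 \<le> x)) \<and>
     (\<forall>i<n. seller_util X i \<in> borel_measurable (joint n mu) \<and>
        (\<forall>x\<ge>0. (\<lambda>q. seller_util X i (q(i := x))) \<in> borel_measurable (joint n mu) \<and>
            (\<integral>q. seller_util X i (q(i := x)) \<partial>joint n mu)
              \<le> (\<integral>q. seller_util X i q \<partial>joint n mu)))"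

end

theory Submission imports Defs begin

lemma sum_ins: "finite S \<Longrightarrow> i \<notin> S \<Longrightarrow> sum p (insert i S) = p i + sum p S"
  by simp

lemma C1:
  assumes val: "valuation n v" and sm: "submodular_val n v" and dm: "decision_map n v X"
    and p: "nonneg_prices n p" and i: "i < n" and x: "0 \<le> x" "x < marg v {i} ({..<n} - {i})"
  shows "i \<in> X (p(i:=x))"
proof (rule ccontr)
  assume ni: "i \<notin> X (p(i:=x))"
  let ?p = "p(i:=x)" let ?S = "X ?p"
  have pn: "nonneg_prices n ?p" using p x unfolding nonneg_prices_def by auto
  hence D: "?S \<in> demand n v ?p" using dm unfolding decision_map_def by auto
  hence S: "?S \<subseteq> {..<n}" unfolding demand_def by auto
  have fin: "finite ?S" using S finite_subset by blast
  have "v (insert i ?S) - sum ?p (insert i ?S) \<le> v ?S - sum ?p ?S"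
    using D i S unfolding demand_def by auto
  moreover have "sum ?p (insert i ?S) = x + sum ?p ?S" using fin ni by simp
  ultimately have 1: "v (insert i ?S) - v ?S \<le> x" by simp
  have "v ((?S \<union> {i}) \<union> ({..<n} - {i})) + v ((?S \<union> {i}) \<inter> ({..<n} - {i})) \<le> v (?S \<union> {i}) + v ({..<n} - {i})"
  proof -
    have "?S \<union> {i} \<subseteq> {..<n}" "{..<n} - {i} \<subseteq> {..<n}" using S i by auto
    thus ?thesis using sm unfolding submodular_val_def by blast
  qed
  moreover have "(?S \<union> {i}) \<union> ({..<n} - {i}) = {..<n}" using S i by auto
  moreover have "(?S \<union> {i}) \<inter> ({..<n} - {i}) = ?S" using S ni by auto
  moreover have "({..<n} - {i}) \<union> {i} = {..<n}" using i by auto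
  ultimately show False using 1 x unfolding marg_def by simp
qed

lemma C2:
  assumes val: "valuation n v" and mon: "monotone_val n v" and dm: "decision_map n v X"
    and p: "nonneg_prices n p" and ii: "i \<in> X p"
  shows "p i \<le> v {..<n}"
proof -
  have D: "X p \<in> demand n v p" using dm p unfolding decision_map_def by auto
  hence S: "X p \<subseteq> {..<n}" unfolding demand_def by auto
  have fin: "finite (X p)" using S finite_subset by blast
  have "v (X p - {i}) - sum p (X p - {i}) \<le> v (X p) - sum p (X p)"
  proof -
    have "X p - {i} \<subseteq> {..<n}" using S by auto
    thus ?thesis using D unfolding demand_def by blast
  qed
  moreover have "sum p (X p) = p i + sum p (X p - {i})" using fin ii
    by (metis sum.remove)
  moreover have "0 \<le> v (X p - {i})" using val S unfolding valuation_def by (meson Diff_subset order_trans)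
  moreover have "v (X p) \<le> v {..<n}" using mon S unfolding monotone_val_def by auto
  ultimately show ?thesis by simp
qed

lemma C3:
  assumes dm: "decision_map n v X"
    and p: "nonneg_prices n p" and i: "i < n" and x: "0 \<le> x" "x < marg v {i} (X p)"
  shows "i \<in> X (p(i:=x))"
proof (rule ccontr)
  assume ni: "i \<notin> X (p(i:=x))"
  let ?p = "p(i:=x)" let ?S = "X ?p"
  have pn: "nonneg_prices n ?p" using p x unfolding nonneg_prices_def by auto
  hence D: "?S \<in> demand n v ?p" using dm unfolding decision_map_def by auto
  hence S: "?S \<subseteq> {..<n}" unfolding demand_def by auto
  have D0: "X p \<in> demand n v p" using dm p unfolding decision_map_def by auto
  hence S0: "X p \<subseteq> {..<n}" unfolding demand_def by auto
  have fin0: "finite (X p)" using S0 finite_subset by blast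
  have nx: "i \<notin> X p"
  proof
    assume "i \<in> X p" hence "X p \<union> {i} = X p" by auto
    thus False using x unfolding marg_def by simp
  qed
  have e1: "sum ?p ?S = sum p ?S" using ni by (intro sum.cong) auto
  have e2: "sum ?p (X p) = sum p (X p)" using nx by (intro sum.cong) auto
  have "v ?S - sum p ?S \<le> v (X p) - sum p (X p)" using D0 S unfolding demand_def by auto
  moreover have "v (insert i (X p)) - sum ?p (insert i (X p)) \<le> v ?S - sum ?p ?S"
    using D S0 i unfolding demand_def by auto
  moreover have "sum ?p (insert i (X p)) = x + sum ?p (X p)" using fin0 nx by simp
  ultimately show False using e1 e2 x unfolding marg_def by simp
qed

theorem mainTheorem7:
  fixes n :: nat and v :: "nat set \<Rightarrow> real"
    and X :: "(nat \<Rightarrow> real) \<Rightarrow> nat set" and mu :: "nat \<Rightarrow> real measure"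
  assumes "valuation n v" and "monotone_val n v" and "submodular_val n v"
    and "decision_map n v X"
    and "mixed_NE n X mu"
  shows "\<forall>i<n. (AE x in mu i. marg v {i} ({..<n} - {i}) \<le> x) \<and>
           ((\<integral>q. seller_util X i q \<partial>joint n mu) = 0 \<longrightarrow>
              (AE q in joint n mu. \<not> (marg v {i} (X q) > 0)))"
proof (intro allI impI conjI)
  fix i assume i: "i < n"
  note NE = assms(5)[unfolded mixed_NE_def]
  have ps: "\<And>j. j<n \<Longrightarrow> prob_space (mu j)" using NE by blast
  have NEa: "\<And>j. j<n \<Longrightarrow> AE x in mu j. 0 \<le> x" using NE by blast
  have NEm: "\<And>j. j<n \<Longrightarrow> seller_util X j \<in> borel_measurable (joint n mu)" using NE by blast
  have NEd: "\<And>j x. j<n \<Longrightarrow> 0 \<le> x \<Longrightarrow> (\<lambda>q. seller_util X j (q(j := x))) \<in> borel_measurable (joint n mu)"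
    using NE by blast
  have NEle: "\<And>j x. j<n \<Longrightarrow> 0 \<le> x \<Longrightarrow> (\<integral>q. seller_util X j (q(j := x)) \<partial>joint n mu)
              \<le> (\<integral>q. seller_util X j q \<partial>joint n mu)"
    using NE by blast
  have PJ: "prob_space (joint n mu)" unfolding joint_def by (rule prob_space_PiM) (use ps in auto)
  have AEnn: "AE q in joint n mu. nonneg_prices n q"
  proof -
    have "AE q in joint n mu. \<forall>j\<in>{..<n}. 0 \<le> q j"
      unfolding joint_def
      by (subst AE_finite_all) (auto intro!: AE_PiM_component ps NEa)
    thus ?thesis unfolding nonneg_prices_def by auto
  qed
  interpret PJ: prob_space "joint n mu" by (rule PJ)
  let ?u = "seller_util X i"
  {
    assume Z0: "(\<integral>q. ?u q \<partial>joint n mu) = 0"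
    have g: "AE q in joint n mu. ?u (q(i:=real_of_rat r)) = 0" if r: "r > 0" for r
    proof -
      define x where "x = real_of_rat r"
      have x0: "0 \<le> x" using r unfolding x_def by simp
      have m: "(\<lambda>q. ?u (q(i := x))) \<in> borel_measurable (joint n mu)"
        and le: "(\<integral>q. ?u (q(i := x)) \<partial>joint n mu) \<le> (\<integral>q. ?u q \<partial>joint n mu)"
        using NEd NEle i x0 by auto
      have int: "integrable (joint n mu) (\<lambda>q. ?u (q(i := x)))"
        by (rule PJ.integrable_const_bound[where B=x]) (use m x0 in \<open>auto simp: seller_util_def\<close>)
      have nn: "\<And>q. 0 \<le> ?u (q(i := x))" using x0 by (auto simp: seller_util_def)
      have "0 \<le> (\<integral>q. ?u (q(i := x)) \<partial>joint n mu)"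
        by (rule Bochner_Integration.integral_nonneg) (use nn in auto)
      hence "(\<integral>q. ?u (q(i := x)) \<partial>joint n mu) = 0"
        using le Z0 by auto
      thus ?thesis using integral_nonneg_eq_0_iff_AE[OF int] nn unfolding x_def by auto
    qed
    have "AE q in joint n mu. \<forall>r::rat. r > 0 \<longrightarrow> ?u (q(i:=real_of_rat r)) = 0"
      by (subst AE_all_countable) (auto intro: g)
    thus "AE q in joint n mu. \<not> (marg v {i} (X q) > 0)" using AEnn
    proof eventually_elim
      case (elim q)
      show ?case
      proof
        assume mp: "marg v {i} (X q) > 0"
        obtain y where y: "y \<in> \<rat>" "0 < y" "y < marg v {i} (X q)"
          using Rats_dense_in_real[OF mp] by auto
        then obtain r where r: "y = real_of_rat r" by (auto elim: Rats_cases)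
        have "i \<in> X (q(i:=y))" using C3[OF assms(4) elim(2) i] y by auto
        hence "?u (q(i:=y)) = y" by (simp add: seller_util_def)
        moreover have "r > 0" using y r by simp
        ultimately show False using elim(1) r y by auto
      qed
    qed
  }
  show "AE x in mu i. marg v {i} ({..<n} - {i}) \<le> x"
  proof -
    define mu' where "mu' j = (if j < n then mu j else mu i)" for j
    have ps': "\<And>j. prob_space (mu' j)" unfolding mu'_def using ps i by auto
    interpret product_sigma_finite mu'
      unfolding product_sigma_finite_def
      by (intro allI prob_space_imp_sigma_finite ps')
    define I where "I = {..<n} - {i}"
    have NI: "{..<n} = insert i I" "finite I" "i \<notin> I" using i unfolding I_def by auto
    have mui: "mu' i = mu i" using i unfolding mu'_def by simp
    let ?P = "PiM (insert i I) mu'"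
    let ?P' = "PiM I mu'"
    have J: "joint n mu = ?P" unfolding joint_def NI(1)[symmetric]
      by (intro PiM_cong) (auto simp: mu'_def)
    have Pprob: "prob_space ?P" by (rule prob_space_PiM) (use ps' in auto)
    have P'prob: "prob_space ?P'" by (rule prob_space_PiM) (use ps' in auto)
    interpret PP: pair_prob_space ?P' "mu i"
      unfolding pair_prob_space_def pair_sigma_finite_def
      by (intro conjI prob_space_imp_sigma_finite P'prob ps i)
    interpret PQ: prob_space ?P by (rule Pprob)
    define B where "B = v {..<n}"
    have B0: "0 \<le> B" using assms(1) unfolding B_def valuation_def by auto
    define w where "w q = max 0 (min B (?u q))" for q
    have um[measurable]: "?u \<in> borel_measurable ?P" using NEm i J by auto
    have wm[measurable]: "w \<in> borel_measurable ?P" unfolding w_def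
      by (intro borel_measurable_max borel_measurable_min borel_measurable_const um)
    have wb: "\<And>q. norm (w q) \<le> B" using B0 unfolding w_def by auto
    have uw: "?u q = w q" if "nonneg_prices n q" for q
    proof -
      have "0 \<le> ?u q" using that i by (auto simp: seller_util_def nonneg_prices_def)
      moreover have "?u q \<le> B" using C2[OF assms(1,2,4) that] B0
        by (auto simp: seller_util_def B_def)
      ultimately show ?thesis unfolding w_def by auto
    qed
    have AEnnP: "AE q in ?P. nonneg_prices n q" using AEnn unfolding J .
    have wint: "integrable ?P w" by (rule PQ.integrable_const_bound[where B=B]) (use wb in auto)
    have Zw: "(\<integral>q. ?u q \<partial>joint n mu) = (\<integral>q. w q \<partial>?P)"
      unfolding J by (rule integral_cong_AE) (use AEnnP uw in auto)
    have hm: "(\<lambda>(x,y). w (x(i:=y))) \<in> borel_measurable (?P' \<Otimes>\<^sub>M mu i)"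
    proof -
      have "(\<lambda>z. w ((\<lambda>(f, y). f(i := y)) z)) \<in> borel_measurable (?P' \<Otimes>\<^sub>M mu' i)"
        by (rule measurable_compose[OF measurable_add_dim wm])
      moreover have "(\<lambda>z. w ((\<lambda>(f, y). f(i := y)) z)) = (\<lambda>(x,y). w (x(i:=y)))" by auto
      ultimately show ?thesis using mui by simp
    qed
    have hint: "integrable (?P' \<Otimes>\<^sub>M mu i) (\<lambda>(x,y). w (x(i:=y)))"
    proof (rule PP.P.integrable_const_bound[where B=B])
      show "AE x in ?P' \<Otimes>\<^sub>M mu i. norm (case x of (x, y) \<Rightarrow> w (x(i := y))) \<le> B"
        using wb by (simp add: split_beta)
    qed (rule hm)
    define G where "G y = (\<integral>x. w (x(i:=y)) \<partial>?P')" for y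
    have Gint: "integrable (mu i) G" unfolding G_def using PP.integrable_snd[OF hint] by simp
    have ZG: "(\<integral>q. ?u q \<partial>joint n mu) = (\<integral>y. G y \<partial>mu i)"
    proof -
      have "(\<integral>q. w q \<partial>?P) = (\<integral>x. (\<integral>y. w (x(i:=y)) \<partial>mu' i) \<partial>?P')"
        by (rule product_integral_insert[OF NI(2,3) wint])
      also have "\<dots> = (\<integral>y. G y \<partial>mu i)" unfolding G_def mui
        using PP.Fubini_integral[of "\<lambda>x y. w (x(i:=y))"] hint by simp
      finally show ?thesis using Zw by simp
    qed
    have GZ: "G y = (\<integral>q. ?u (q(i:=y)) \<partial>joint n mu)" if y0: "0 \<le> y" for y
    proof -
      have m1[measurable]: "(\<lambda>q. ?u (q(i := y))) \<in> borel_measurable ?P"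
        using NEd i y0 J by auto
      have m2[measurable]: "(\<lambda>q. w (q(i := y))) \<in> borel_measurable ?P"
        unfolding w_def
        by (intro borel_measurable_max borel_measurable_min borel_measurable_const m1)
      have int2: "integrable ?P (\<lambda>q. w (q(i := y)))"
        by (rule PQ.integrable_const_bound[where B=B]) (use wb in auto)
      have "(\<integral>q. w (q(i:=y)) \<partial>?P) = (\<integral>x. (\<integral>z. w ((x(i:=z))(i:=y)) \<partial>mu' i) \<partial>?P')"
        by (rule product_integral_insert[OF NI(2,3) int2])
      also have "\<dots> = G y" unfolding G_def using prob_space.prob_space[OF ps'] by simp
      finally have 1: "(\<integral>q. w (q(i:=y)) \<partial>?P) = G y" .
      have "(\<integral>q. ?u (q(i:=y)) \<partial>?P) = (\<integral>q. w (q(i:=y)) \<partial>?P)"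
      proof (rule integral_cong_AE)
        show "AE q in ?P. ?u (q(i:=y)) = w (q(i:=y))" using AEnnP
        proof eventually_elim
          case (elim q)
          hence "nonneg_prices n (q(i:=y))" using y0 by (auto simp: nonneg_prices_def)
          thus ?case by (rule uw)
        qed
      qed auto
      thus ?thesis using 1 J by simp
    qed
    define m where "m = marg v {i} ({..<n} - {i})"
    have Gy: "G y = y" if "0 \<le> y" "y < m" for y
    proof -
      have "(\<integral>q. ?u (q(i:=y)) \<partial>joint n mu) = (\<integral>q. y \<partial>joint n mu)"
      proof (rule integral_cong_AE)
        show "AE q in joint n mu. ?u (q(i:=y)) = y" using AEnn
        proof eventually_elim
          case (elim q)
          thus ?case using C1[OF assms(1,3,4) elim i that(1)] that(2)
            unfolding m_def by (simp add: seller_util_def)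
        qed
        show "(\<lambda>q. ?u (q(i := y))) \<in> borel_measurable (joint n mu)" using NEd i that by auto
      qed auto
      thus ?thesis using GZ[OF that(1)] PJ.prob_space by simp
    qed
    have GleZ: "G y \<le> (\<integral>q. ?u q \<partial>joint n mu)" if "0 \<le> y" for y
      using GZ[OF that] NEle i that by auto
    have AE0: "AE y in mu i. 0 \<le> y" using NEa i by auto
    show ?thesis
    proof (cases "m \<le> 0")
      case True
      from AE0 show ?thesis by eventually_elim (use True m_def in auto)
    next
      case False
      let ?Z = "\<integral>q. ?u q \<partial>joint n mu"
      have Zm: "m \<le> ?Z"
      proof (rule ccontr)
        assume "\<not> m \<le> ?Z"
        define y where "y = max 0 ((?Z + m) / 2)"
        have "0 \<le> y" "y < m" using False \<open>\<not> m \<le> ?Z\<close> unfolding y_def by auto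
        hence "y \<le> ?Z" using Gy GleZ by fastforce
        thus False using \<open>0 \<le> y\<close> False \<open>\<not> m \<le> ?Z\<close> unfolding y_def by auto
      qed
      interpret MI: prob_space "mu i" using ps i by auto
      have dint: "integrable (mu i) (\<lambda>y. ?Z - G y)" using Gint by auto
      have "(\<integral>y. ?Z - G y \<partial>mu i) = ?Z - (\<integral>y. G y \<partial>mu i)"
        using Gint prob_space.prob_space[OF ps[OF i]] by (simp add: Bochner_Integration.integral_diff)
      hence "(\<integral>y. ?Z - G y \<partial>mu i) = 0" using ZG by simp
      moreover have "AE y in mu i. 0 \<le> ?Z - G y" using AE0 by eventually_elim (use GleZ in auto)
      ultimately have "AE y in mu i. ?Z - G y = 0"
        using integral_nonneg_eq_0_iff_AE[OF dint] by simp
      with AE0 show ?thesis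
      proof eventually_elim
        case (elim y)
        show ?case
        proof (rule ccontr)
          assume "\<not> marg v {i} ({..<n} - {i}) \<le> y"
          hence "\<not> m \<le> y" using m_def by simp
          hence "G y = y" using Gy[OF elim(1)] by auto
          thus False using elim Zm \<open>\<not> m \<le> y\<close> m_def by auto
        qed
      qed
    qed
  qed
qed

end
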